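(* Let $\mathcal I$ be an ideal on $\omega$. Then (1) $\mathrm{non}(\mathcal I\text{-p},\mathcal I\text{-}\sigma\text{-u})=\mathfrak b_\sigma(\mathcal I)$; (2) $\mathrm{non}(\mathcal I\text{-p},\mathcal I\text{-qn})=\mathfrak b_s(\mathcal I)$; (3) $\mathrm{non}(\mathcal I\text{-qn},\mathcal I\text{-}\sigma\text{-u})=\mathrm{add}_\omega(\mathcal I)$.
   Context: An ideal on $\omega$ is a family $\mathcal I\subseteq\mathcal P(\omega)$ closed under finite unions and subsets, containing all finite sets, with $\omega\notin\mathcal I$. A real sequence $(a_n)$ is $\mathcal I$-convergent to $0$ if $\{n:|a_n|\ge\varepsilon\}\in\mathcal I$ for all $\varepsilon>0$. For a sequence $(f_n)$ of real functions on a set $X$: $\mathcal I$-p means $(f_n(x))$ is $\mathcal I$-convergent to $0$ for each $x$; $\mathcal I$-u means $\{n:\exists x\in X\,(|f_n(x)|\ge\varepsilon)\}\in\mathcal I$ for each $\varepsilon>0$; $\mathcal I$-$\sigma$-u means $X=\bigcup_{k\in\omega}X_k$ with $(f_n\restriction X_k)$ $\mathcal I$-u convergent to $0$ for each $k$; $\mathcal I$-qn means there is a sequence $(\varepsilon_n)$ of positive reals $\mathcal I$-convergent to $0$ with $\{n:|f_n(x)|\ge\varepsilon_n\}\in\mathcal I$ for each $x$. $\mathcal C(X)$ = continuous real functions on $X$. Normal space = Hausdorff space in which disjoint closed sets have disjoint open neighbourhoods. $(\alpha,\beta)$ is the class of normal spaces $X$ such that for all $(f_n)$ in $\mathcal C(X)$,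 $f_n\to0$ in sense $\alpha$ iff in sense $\beta$; $\mathrm{non}(\alpha,\beta)$ is the least cardinality of a normal space not in $(\alpha,\beta)$, or $\infty$ if none. Cardinals (with $\min\emptyset=\infty$): for ideals $\mathcal I,\mathcal J,\mathcal K$ on $\omega$, let $\widehat{\mathcal P}_{\mathcal I}$ be the set of sequences $(A_n)\in\mathcal I^\omega$ of pairwise disjoint sets, $\mathcal P_{\mathcal I}$ those in $\widehat{\mathcal P}_{\mathcal I}$ with $\bigcup_nA_n=\omega$, and $\mathcal M_{\mathcal I}$ the set of sequences $(E_k)\in\mathcal I^\omega$ with $E_k\subseteq E_{k+1}$ for all $k$. $\mathfrak b_s(\mathcal I,\mathcal J,\mathcal K)=\min\{|\mathcal E|:\mathcal E\subseteq\widehat{\mathcal P}_{\mathcal K}$ and for every $(A_n)\in\mathcal P_{\mathcal J}$ there is $(E_n)\in\mathcal E$ with $\bigcup_{n}(A_{n+1}\cap\bigcup_{i\le n}E_i)\notin\mathcal I\}$; $\mathfrak b_\sigma(\mathcal I,\mathcal J)=\min\{|\mathcal E|:\mathcal E\subseteq\mathcal M_{\mathcal I}$ and for every $(A_n)\in\mathcal M_{\mathcal J}$ there is $(E_n)\in\mathcal E$ with $E_n\not\subseteq A_n$ for infinitely many $n\}$; $\mathrm{add}_\omega(\mathcal I,\mathcal J)=\min\{|\mathcal A|:\mathcal A\subseteq\mathcal I$ and for every $(B_n)\in\mathcal J^\omega$ there is $A\in\mathcal A$ with $A\not\subseteq B_n$ for all $n\}$. $\mathfrak b_s(\mathcal I)=\mathfrak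 b_s(\mathcal I,\mathcal I,\mathcal I)$, $\mathfrak b_\sigma(\mathcal I)=\mathfrak b_\sigma(\mathcal I,\mathcal I)$, $\mathrm{add}_\omega(\mathcal I)=\mathrm{add}_\omega(\mathcal I,\mathcal I)$. *)

theory Defs
  imports "HOL-Analysis.Analysis" "HOL-Library.Equipollence"
begin

definition is_ideal :: "nat set set \<Rightarrow> bool" where
  "is_ideal I \<longleftrightarrow>
     (\<forall>A\<in>I. \<forall>B\<in>I. A \<union> B \<in> I) \<and>
     (\<forall>A\<in>I. \<forall>B. B \<subseteq> A \<longrightarrow> B \<in> I) \<and>
     (\<forall>A. finite A \<longrightarrow> A \<in> I) \<and>
     UNIV \<notin> I"

definition Iconv :: "nat set set \<Rightarrow> (nat \<Rightarrow> real) \<Rightarrow> bool" where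
  "Iconv I a \<longleftrightarrow> (\<forall>\<epsilon>>0. {n. \<bar>a n\<bar> \<ge> \<epsilon>} \<in> I)"

definition Ip :: "nat set set \<Rightarrow> 'a set \<Rightarrow> (nat \<Rightarrow> 'a \<Rightarrow> real) \<Rightarrow> bool" where
  "Ip I X f \<longleftrightarrow> (\<forall>x\<in>X. Iconv I (\<lambda>n. f n x))"

definition Iu :: "nat set set \<Rightarrow> 'a set \<Rightarrow> (nat \<Rightarrow> 'a \<Rightarrow> real) \<Rightarrow> bool" where
  "Iu I X f \<longleftrightarrow> (\<forall>\<epsilon>>0. {n. \<exists>x\<in>X. \<bar>f n x\<bar> \<ge> \<epsilon>} \<in> I)"

definition Isu :: "nat set set \<Rightarrow> 'a set \<Rightarrow> (nat \<Rightarrow> 'a \<Rightarrow> real) \<Rightarrow> bool" where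
  "Isu I X f \<longleftrightarrow> (\<exists>Xk :: nat \<Rightarrow> 'a set. X = (\<Union>k. Xk k) \<and> (\<forall>k. Iu I (Xk k) f))"

definition Iqn :: "nat set set \<Rightarrow> 'a set \<Rightarrow> (nat \<Rightarrow> 'a \<Rightarrow> real) \<Rightarrow> bool" where
  "Iqn I X f \<longleftrightarrow> (\<exists>eps :: nat \<Rightarrow> real. (\<forall>n. eps n > 0) \<and> Iconv I eps \<and>
                      (\<forall>x\<in>X. {n. \<bar>f n x\<bar> \<ge> eps n} \<in> I))"

definition normal_T2 :: "'a topology \<Rightarrow> bool" where
  "normal_T2 X \<longleftrightarrow> Hausdorff_space X \<and> normal_space X"

definition in_class ::
  "('a set \<Rightarrow> (nat \<Rightarrow> 'a \<Rightarrow> real) \<Rightarrow> bool) \<Rightarrow> ('a set \<Rightarrow> (nat \<Rightarrow> 'a \<Rightarrow> real) \<Rightarrow> bool)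
    \<Rightarrow> 'a topology \<Rightarrow> bool" where
  "in_class \<alpha> \<beta> X \<longleftrightarrow>
     (\<forall>f :: nat \<Rightarrow> 'a \<Rightarrow> real. (\<forall>n. continuous_map X euclideanreal (f n)) \<longrightarrow>
        (\<alpha> (topspace X) f \<longleftrightarrow> \<beta> (topspace X) f))"

definition hatP :: "nat set set \<Rightarrow> (nat \<Rightarrow> nat set) set" where
  "hatP I = {A. (\<forall>n. A n \<in> I) \<and> disjoint_family A}"

definition PP :: "nat set set \<Rightarrow> (nat \<Rightarrow> nat set) set" where
  "PP I = {A. A \<in> hatP I \<and> (\<Union>n. A n) = UNIV}"

definition MM :: "nat set set \<Rightarrow> (nat \<Rightarrow> nat set) set" where
  "MM I = {E. (\<forall>k. E k \<in> I) \<and> (\<forall>k. E k \<subseteq> E (Suc k))}"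

text \<open>Witness families for the cardinal invariants (the cardinal is the least size
  of a witness family, or infinity if none exists).\<close>
definition bs_witness :: "nat set set \<Rightarrow> nat set set \<Rightarrow> nat set set \<Rightarrow> (nat \<Rightarrow> nat set) set \<Rightarrow> bool" where
  "bs_witness I J K \<E> \<longleftrightarrow> \<E> \<subseteq> hatP K \<and>
     (\<forall>A\<in>PP J. \<exists>E\<in>\<E>. (\<Union>n. A (Suc n) \<inter> (\<Union>i\<le>n. E i)) \<notin> I)"

definition bsigma_witness :: "nat set set \<Rightarrow> nat set set \<Rightarrow> (nat \<Rightarrow> nat set) set \<Rightarrow> bool" where
  "bsigma_witness I J \<E> \<longleftrightarrow> \<E> \<subseteq> MM I \<and>
     (\<forall>A\<in>MM J. \<exists>E\<in>\<E>. infinite {n. \<not> E n \<subseteq> A n})"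

definition addw_witness :: "nat set set \<Rightarrow> nat set set \<Rightarrow> nat set set \<Rightarrow> bool" where
  "addw_witness I J \<A> \<longleftrightarrow> \<A> \<subseteq> I \<and>
     (\<forall>B :: nat \<Rightarrow> nat set. (\<forall>n. B n \<in> J) \<longrightarrow> (\<exists>A\<in>\<A>. \<forall>n. \<not> A \<subseteq> B n))"

end

theory Submission
  imports Defs
begin

lemma idl_un: "is_ideal I \<Longrightarrow> A \<in> I \<Longrightarrow> B \<in> I \<Longrightarrow> A \<union> B \<in> I"
  unfolding is_ideal_def by blast
lemma idl_sub: "is_ideal I \<Longrightarrow> A \<in> I \<Longrightarrow> B \<subseteq> A \<Longrightarrow> B \<in> I"
  unfolding is_ideal_def by blast
lemma idl_fin: "is_ideal I \<Longrightarrow> finite A \<Longrightarrow> A \<in> I"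
  unfolding is_ideal_def by blast
lemma idl_UN: assumes "is_ideal I" "finite K" "\<And>k. k \<in> K \<Longrightarrow> A k \<in> I"
  shows "(\<Union>k\<in>K. A k) \<in> I"
  using assms(2,3)
proof (induction K rule: finite_induct)
  case empty then show ?case using idl_fin[OF assms(1)] by simp
next
  case (insert x F) then show ?case using idl_un[OF assms(1)] by simp
qed

lemma IsuI: fixes Xk :: "nat \<Rightarrow> 'b set" and f :: "nat \<Rightarrow> 'b \<Rightarrow> real"
  assumes "T = (\<Union>k. Xk k)" "\<And>k. Iu I (Xk k) f" shows "Isu I T f"
  unfolding Isu_def using assms by auto

definition r :: "nat \<Rightarrow> real" where "r k = 1 / real (Suc k)"

lemma r_pos: "r k > 0" by (simp add: r_def)
lemma r_le_iff: "r a \<le> r b \<longleftrightarrow> b \<le> a"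
  by (simp add: r_def divide_simps)
lemma r_less_iff: "r a < r b \<longleftrightarrow> b < a"
  by (simp add: r_def divide_simps)
lemma r_le1: "r k \<le> 1" by (simp add: r_def)
lemma r_small: assumes "(e::real) > 0" shows "\<exists>K. r K < e"
proof -
  obtain n where "n > 0" "inverse (real n) < e" using assms ex_inverse_of_nat_less by blast
  then have "r n < e" unfolding r_def using assms
    by (smt (verit, best) inverse_eq_divide inverse_less_iff_less of_nat_0_less_iff of_nat_less_iff lessI)
  then show ?thesis by blast
qed

lemma Iconv_r: "is_ideal I \<Longrightarrow> Iconv I r"
  unfolding Iconv_def
proof (intro allI impI)
  fix e :: real assume "is_ideal I" "e > 0"
  obtain K where K: "r K < e" using r_small[OF \<open>e>0\<close>] by blast
  have "{n. e \<le> \<bar>r n\<bar>} \<subseteq> {..<K}"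
  proof
    fix n assume "n \<in> {n. e \<le> \<bar>r n\<bar>}"
    then have "r K < r n" using K r_pos[of n] by auto
    then show "n \<in> {..<K}" by (simp add: r_less_iff)
  qed
  then show "{n. e \<le> \<bar>r n\<bar>} \<in> I" using idl_sub idl_fin \<open>is_ideal I\<close> by (meson finite_lessThan)
qed

lemma Isu_Ip: fixes X :: "'a set" assumes "is_ideal I" "Isu I X f" shows "Ip I X f"
proof -
  obtain Xk :: "nat \<Rightarrow> 'a set" where X: "X = (\<Union>k. Xk k)" and U: "\<And>k. Iu I (Xk k) f"
    using assms(2) unfolding Isu_def by blast
  show ?thesis unfolding Ip_def Iconv_def
  proof (intro ballI allI impI)
    fix x e assume "x \<in> X" "(e::real) > 0"
    then obtain k where "x \<in> Xk k" using X by blast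
    have "{n. e \<le> \<bar>f n x\<bar>} \<subseteq> {n. \<exists>x\<in>Xk k. e \<le> \<bar>f n x\<bar>}" using \<open>x \<in> Xk k\<close> by auto
    moreover have "{n. \<exists>x\<in>Xk k. e \<le> \<bar>f n x\<bar>} \<in> I" using U \<open>e>0\<close> unfolding Iu_def by blast
    ultimately show "{n. e \<le> \<bar>f n x\<bar>} \<in> I" using idl_sub[OF assms(1)] by blast
  qed
qed

lemma Iqn_Ip: fixes X :: "'a set" assumes "is_ideal I" "Iqn I X f" shows "Ip I X f"
proof -
  obtain eps where ep: "Iconv I eps" and ex: "\<And>x. x\<in>X \<Longrightarrow> {n. \<bar>f n x\<bar> \<ge> eps n} \<in> I"
    using assms(2) unfolding Iqn_def by blast
  show ?thesis unfolding Ip_def Iconv_def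
  proof (intro ballI allI impI)
    fix x e assume "x \<in> X" "(e::real) > 0"
    have "{n. e \<le> \<bar>f n x\<bar>} \<subseteq> {n. \<bar>f n x\<bar> \<ge> eps n} \<union> {n. e \<le> \<bar>eps n\<bar>}" by auto
    moreover have "{n. \<bar>f n x\<bar> \<ge> eps n} \<union> {n. e \<le> \<bar>eps n\<bar>} \<in> I"
      using ex[OF \<open>x\<in>X\<close>] ep \<open>e>0\<close> idl_un[OF assms(1)] unfolding Iconv_def by blast
    ultimately show "{n. e \<le> \<bar>f n x\<bar>} \<in> I" using idl_sub[OF assms(1)] by blast
  qed
qed

lemma Isu_Iqn: fixes X :: "'a set" assumes I: "is_ideal I" and "Isu I X f" shows "Iqn I X f"
proof -
  obtain Xk :: "nat \<Rightarrow> 'a set" where X: "X = (\<Union>k. Xk k)" and U: "\<And>k. Iu I (Xk k) f"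
    using assms(2) unfolding Isu_def by blast
  define C where "C k = (\<Union>j\<in>{..k}. {n. \<exists>x\<in>Xk j. r k \<le> \<bar>f n x\<bar>})" for k
  have CI: "C k \<in> I" for k
    unfolding C_def using U r_pos unfolding Iu_def by (intro idl_UN[OF I]) auto
  define kap where "kap n = (LEAST k. n \<in> C k)" for n
  define eps where "eps n = (if \<exists>k. n \<in> C k then r (kap n - 1) else r n)" for n
  have kapC: "n \<in> C (kap n)" if "\<exists>k. n \<in> C k" for n
    unfolding kap_def using that by (rule LeastI_ex)
  have epos: "\<forall>n. eps n > 0" unfolding eps_def using r_pos by auto
  have ec: "Iconv I eps" unfolding Iconv_def
  proof (intro allI impI)
    fix e :: real assume "e > 0"
    obtain K where K: "r K < e" using r_small[OF \<open>e>0\<close>] by blast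
    have "{n. e \<le> \<bar>eps n\<bar>} \<subseteq> (\<Union>k\<in>{..K}. C k) \<union> {..<K}"
    proof
      fix n assume "n \<in> {n. e \<le> \<bar>eps n\<bar>}"
      then have en: "e \<le> eps n" using epos[rule_format, of n] by simp
      show "n \<in> (\<Union>k\<in>{..K}. C k) \<union> {..<K}"
      proof (cases "\<exists>k. n \<in> C k")
        case True
        then have "r K < r (kap n - 1)" using en K unfolding eps_def by auto
        then have "kap n \<le> K" by (simp add: r_less_iff)
        then show ?thesis using kapC[OF True] by auto
      next
        case False
        then have "r K < r n" using en K unfolding eps_def by auto
        then show ?thesis by (simp add: r_less_iff)
      qed
    qed
    moreover have "(\<Union>k\<in>{..K}. C k) \<union> {..<K} \<in> I"
      using CI idl_fin[OF I] by (intro idl_un[OF I] idl_UN[OF I]) auto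
    ultimately show "{n. e \<le> \<bar>eps n\<bar>} \<in> I" using idl_sub[OF I] by blast
  qed
  have bad: "{n. \<bar>f n x\<bar> \<ge> eps n} \<in> I" if "x \<in> X" for x
  proof -
    obtain j where xj: "x \<in> Xk j" using X \<open>x\<in>X\<close> by blast
    have "{n. \<bar>f n x\<bar> \<ge> eps n} \<subseteq> (\<Union>k\<in>{..j}. C k)"
    proof
      fix n assume "n \<in> {n. \<bar>f n x\<bar> \<ge> eps n}"
      then have fn: "\<bar>f n x\<bar> \<ge> eps n" by simp
      show "n \<in> (\<Union>k\<in>{..j}. C k)"
      proof (cases "\<exists>k. n \<in> C k")
        case True
        have "kap n \<le> j"
        proof (rule ccontr)
          assume "\<not> kap n \<le> j"
          then have "j \<le> kap n - 1" "kap n - 1 < kap n" by auto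
          then have "n \<notin> C (kap n - 1)" unfolding kap_def using not_less_Least by blast
          moreover have "r (kap n - 1) \<le> \<bar>f n x\<bar>" using fn True unfolding eps_def by auto
          ultimately show False using xj \<open>j \<le> kap n - 1\<close> unfolding C_def by auto
        qed
        then show ?thesis using kapC[OF True] by auto
      next
        case False
        have "r (max j n) \<le> r n" by (simp add: r_le_iff)
        then have "r (max j n) \<le> \<bar>f n x\<bar>" using fn False unfolding eps_def by auto
        then have "n \<in> C (max j n)" using xj unfolding C_def by auto
        then show ?thesis using False by blast
      qed
    qed
    moreover have "(\<Union>k\<in>{..j}. C k) \<in> I" using CI by (intro idl_UN[OF I]) auto
    ultimately show ?thesis using idl_sub[OF I] by blast
  qed
  show ?thesis unfolding Iqn_def using epos ec bad by blast
qed

lemma low1: fixes T :: "'a set" assumes I: "is_ideal I" and p: "Ip I T f" and ns: "\<not> Isu I T f"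
  shows "\<exists>\<E>. bsigma_witness I I \<E> \<and> \<E> \<lesssim> T"
proof -
  define h where "h x = (\<lambda>k. {n. r k \<le> \<bar>f n x\<bar>})" for x
  define \<E> where "\<E> = h ` T"
  have sub: "\<E> \<subseteq> MM I"
  proof
    fix E assume "E \<in> \<E>"
    then obtain x where x: "x \<in> T" "E = h x" unfolding \<E>_def by blast
    have "E k \<in> I" for k using p x r_pos unfolding Ip_def Iconv_def h_def by auto
    moreover have "E k \<subseteq> E (Suc k)" for k
    proof
      fix n assume "n \<in> E k"
      then have "r k \<le> \<bar>f n x\<bar>" using x unfolding h_def by simp
      moreover have "r (Suc k) \<le> r k" by (simp add: r_le_iff)
      ultimately show "n \<in> E (Suc k)" using x unfolding h_def by simp
    qed
    ultimately show "E \<in> MM I" unfolding MM_def by blast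
  qed
  have wit: "\<exists>E\<in>\<E>. infinite {n. \<not> E n \<subseteq> A n}" if A: "A \<in> MM I" for A
  proof (rule ccontr)
    assume "\<not> ?thesis"
    then have fin: "finite {k. \<not> h x k \<subseteq> A k}" if "x \<in> T" for x using that unfolding \<E>_def by blast
    define Xk where "Xk m = {x\<in>T. \<forall>k\<ge>m. h x k \<subseteq> A k}" for m
    have cov: "T = (\<Union>m. Xk m)"
    proof
      show "T \<subseteq> (\<Union>m. Xk m)"
      proof
        fix x assume "x \<in> T"
        obtain m where m: "{k. \<not> h x k \<subseteq> A k} \<subseteq> {..<m}"
          using fin[OF \<open>x\<in>T\<close>] finite_nat_iff_bounded by blast
        have "\<forall>k\<ge>m. h x k \<subseteq> A k"
        proof (intro allI impI)
          fix k assume "m \<le> k"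
          show "h x k \<subseteq> A k"
          proof (rule ccontr)
            assume "\<not> h x k \<subseteq> A k"
            then have "k \<in> {..<m}" using m by blast
            then show False using \<open>m \<le> k\<close> by simp
          qed
        qed
        then have "x \<in> Xk m" using \<open>x\<in>T\<close> unfolding Xk_def by simp
        then show "x \<in> (\<Union>m. Xk m)" by blast
      qed
    qed (auto simp: Xk_def)
    have IU: "Iu I (Xk m) f" for m unfolding Iu_def
    proof (intro allI impI)
      fix e :: real assume "e > 0"
      obtain K where K: "r K < e" using r_small[OF \<open>e>0\<close>] by blast
      have "{n. \<exists>x\<in>Xk m. e \<le> \<bar>f n x\<bar>} \<subseteq> A (max m K)"
      proof
        fix n assume "n \<in> {n. \<exists>x\<in>Xk m. e \<le> \<bar>f n x\<bar>}"
        then obtain x where x: "x \<in> Xk m" "e \<le> \<bar>f n x\<bar>" by blast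
        have "r (max m K) \<le> r K" by (simp add: r_le_iff)
        then have "n \<in> h x (max m K)" using x K unfolding h_def by auto
        moreover have "h x (max m K) \<subseteq> A (max m K)" using x(1) unfolding Xk_def by simp
        ultimately show "n \<in> A (max m K)" by blast
      qed
      moreover have "A (max m K) \<in> I" using A unfolding MM_def by blast
      ultimately show "{n. \<exists>x\<in>Xk m. e \<le> \<bar>f n x\<bar>} \<in> I" using idl_sub[OF I] by blast
    qed
    have "Isu I T f" by (rule IsuI[OF cov IU])
    then show False using ns by blast
  qed
  have "bsigma_witness I I \<E>" unfolding bsigma_witness_def using sub wit by blast
  moreover have "\<E> \<lesssim> T" unfolding \<E>_def by (rule image_lepoll)
  ultimately show ?thesis by blast
qed

lemma low3: fixes T :: "'a set" assumes I: "is_ideal I" and q: "Iqn I T f" and ns: "\<not> Isu I T f"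
  shows "\<exists>\<A>. addw_witness I I \<A> \<and> \<A> \<lesssim> T"
proof -
  obtain eps where ep: "Iconv I eps" and ex: "\<And>x. x\<in>T \<Longrightarrow> {n. \<bar>f n x\<bar> \<ge> eps n} \<in> I"
    using q unfolding Iqn_def by blast
  define h where "h x = {n. \<bar>f n x\<bar> \<ge> eps n}" for x
  define \<A> where "\<A> = h ` T"
  have sub: "\<A> \<subseteq> I" unfolding \<A>_def h_def using ex by blast
  have wit: "\<exists>A\<in>\<A>. \<forall>n. \<not> A \<subseteq> B n" if B: "\<forall>n. B n \<in> I" for B :: "nat \<Rightarrow> nat set"
  proof (rule ccontr)
    assume "\<not> ?thesis"
    then have cv: "\<exists>m. h x \<subseteq> B m" if "x \<in> T" for x using that unfolding \<A>_def by blast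
    define Xk where "Xk m = {x\<in>T. h x \<subseteq> B m}" for m
    have cov: "T = (\<Union>m. Xk m)" using cv unfolding Xk_def by blast
    have IU: "Iu I (Xk m) f" for m unfolding Iu_def
    proof (intro allI impI)
      fix e :: real assume "e > 0"
      have "{n. \<exists>x\<in>Xk m. e \<le> \<bar>f n x\<bar>} \<subseteq> B m \<union> {n. e \<le> \<bar>eps n\<bar>}"
        unfolding Xk_def h_def by force
      moreover have "B m \<union> {n. e \<le> \<bar>eps n\<bar>} \<in> I"
        using B ep \<open>e>0\<close> unfolding Iconv_def by (intro idl_un[OF I]) auto
      ultimately show "{n. \<exists>x\<in>Xk m. e \<le> \<bar>f n x\<bar>} \<in> I" using idl_sub[OF I] by blast
    qed
    have "Isu I T f" by (rule IsuI[OF cov IU])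
    then show False using ns by blast
  qed
  have "addw_witness I I \<A>" unfolding addw_witness_def using sub wit by blast
  moreover have "\<A> \<lesssim> T" unfolding \<A>_def by (rule image_lepoll)
  ultimately show ?thesis by blast
qed

definition lev :: "real \<Rightarrow> nat" where "lev t = (LEAST k. r k \<le> t)"

lemma lev_le: assumes "t > 0" shows "r (lev t) \<le> t"
proof -
  obtain K where "r K < t" using r_small[OF assms] by blast
  then have "\<exists>k. r k \<le> t" by (auto intro: less_imp_le)
  then show ?thesis unfolding lev_def by (rule LeastI_ex)
qed

lemma lev_min: "r k \<le> t \<Longrightarrow> lev t \<le> k"
  unfolding lev_def by (rule Least_le)

lemma low2: fixes T :: "'a set" assumes I: "is_ideal I" and p: "Ip I T f" and ns: "\<not> Iqn I T f"
  shows "\<exists>\<E>. bs_witness I I I \<E> \<and> \<E> \<lesssim> T"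
proof -
  define h where "h x = (\<lambda>i. {n. f n x \<noteq> 0 \<and> lev \<bar>f n x\<bar> = i})" for x
  define \<E> where "\<E> = h ` T"
  have sub: "\<E> \<subseteq> hatP I"
  proof
    fix E assume "E \<in> \<E>"
    then obtain x where x: "x \<in> T" "E = h x" unfolding \<E>_def by blast
    have "E k \<in> I" for k
    proof -
      have "E k \<subseteq> {n. r k \<le> \<bar>f n x\<bar>}" using x lev_le unfolding h_def by fastforce
      moreover have "{n. r k \<le> \<bar>f n x\<bar>} \<in> I" using p x r_pos unfolding Ip_def Iconv_def by auto
      ultimately show ?thesis using idl_sub[OF I] by blast
    qed
    moreover have "disjoint_family E" using x unfolding disjoint_family_on_def h_def by auto
    ultimately show "E \<in> hatP I" unfolding hatP_def by blast
  qed
  have wit: "\<exists>E\<in>\<E>. (\<Union>n. A (Suc n) \<inter> (\<Union>i\<le>n. E i)) \<notin> I" if A: "A \<in> PP I" for A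
  proof (rule ccontr)
    assume "\<not> ?thesis"
    then have SI: "(\<Union>n. A (Suc n) \<inter> (\<Union>i\<le>n. h x i)) \<in> I" if "x \<in> T" for x
      using that unfolding \<E>_def by blast
    have AI: "A k \<in> I" for k using A unfolding PP_def hatP_def by blast
    have Ad: "disjoint_family A" using A unfolding PP_def hatP_def by blast
    have Acov: "\<exists>k. n \<in> A k" for n using A unfolding PP_def by blast
    define a where "a n = (SOME k. n \<in> A k)" for n
    have aA: "n \<in> A (a n)" for n unfolding a_def using Acov by (rule someI_ex)
    have auniq: "a n = k" if "n \<in> A k" for n k
      using Ad aA[of n] that unfolding disjoint_family_on_def by blast
    define eps where "eps n = r (a n - 1)" for n
    have epos: "\<forall>n. eps n > 0" unfolding eps_def using r_pos by auto
    have ec: "Iconv I eps" unfolding Iconv_def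
    proof (intro allI impI)
      fix e :: real assume "e > 0"
      obtain K where K: "r K < e" using r_small[OF \<open>e>0\<close>] by blast
      have "{n. e \<le> \<bar>eps n\<bar>} \<subseteq> (\<Union>k\<in>{..K}. A k)"
      proof
        fix n assume "n \<in> {n. e \<le> \<bar>eps n\<bar>}"
        then have "r K < r (a n - 1)" using K r_pos[of "a n - 1"] unfolding eps_def by simp
        then have "a n \<le> K" by (simp add: r_less_iff)
        then show "n \<in> (\<Union>k\<in>{..K}. A k)" using aA[of n] by auto
      qed
      moreover have "(\<Union>k\<in>{..K}. A k) \<in> I" using AI by (intro idl_UN[OF I]) auto
      ultimately show "{n. e \<le> \<bar>eps n\<bar>} \<in> I" using idl_sub[OF I] by blast
    qed
    have bad: "{n. \<bar>f n x\<bar> \<ge> eps n} \<in> I" if "x \<in> T" for x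
    proof -
      have "{n. \<bar>f n x\<bar> \<ge> eps n} \<subseteq> (\<Union>n. A (Suc n) \<inter> (\<Union>i\<le>n. h x i)) \<union> A 0"
      proof
        fix n assume "n \<in> {n. \<bar>f n x\<bar> \<ge> eps n}"
        then have fn: "\<bar>f n x\<bar> \<ge> r (a n - 1)" unfolding eps_def by simp
        show "n \<in> (\<Union>n. A (Suc n) \<inter> (\<Union>i\<le>n. h x i)) \<union> A 0"
        proof (cases "a n")
          case 0 then show ?thesis using aA[of n] by auto
        next
          case (Suc j)
          then have fj: "r j \<le> \<bar>f n x\<bar>" using fn by simp
          then have "f n x \<noteq> 0" using r_pos[of j] by auto
          moreover have "lev \<bar>f n x\<bar> \<le> j" using fj by (rule lev_min)
          ultimately have "n \<in> (\<Union>i\<le>j. h x i)" unfolding h_def by auto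
          moreover have "n \<in> A (Suc j)" using aA[of n] Suc by simp
          ultimately show ?thesis by blast
        qed
      qed
      moreover have "(\<Union>n. A (Suc n) \<inter> (\<Union>i\<le>n. h x i)) \<union> A 0 \<in> I"
        using SI[OF that] AI by (intro idl_un[OF I])
      ultimately show ?thesis using idl_sub[OF I] by blast
    qed
    have "Iqn I T f" unfolding Iqn_def using epos ec bad by blast
    then show False using ns by blast
  qed
  have "bs_witness I I I \<E>" unfolding bs_witness_def using sub wit by blast
  moreover have "\<E> \<lesssim> T" unfolding \<E>_def by (rule image_lepoll)
  ultimately show ?thesis by blast
qed
definition F1 :: "(nat \<Rightarrow> nat set) \<Rightarrow> nat \<Rightarrow> real" where
  "F1 E n = (if \<exists>k. n \<in> E k then r (LEAST k. n \<in> E k) else 0)"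

lemma F1_ge: assumes "n \<in> E k" shows "r k \<le> F1 E n"
proof -
  have "(LEAST k. n \<in> E k) \<le> k" using assms by (rule Least_le)
  then show ?thesis using assms unfolding F1_def by (auto simp: r_le_iff)
qed

lemma F1_pos: assumes "e > 0" "e \<le> \<bar>F1 E n\<bar>"
  shows "\<exists>k. n \<in> E k \<and> r k = F1 E n"
proof -
  have ex: "\<exists>k. n \<in> E k" using assms unfolding F1_def by (auto split: if_splits)
  then show ?thesis unfolding F1_def using LeastI_ex[OF ex] by auto
qed

lemma F1_nonneg: "F1 E n \<ge> 0" unfolding F1_def using r_pos by (auto intro: less_imp_le)

lemma real1: assumes I: "is_ideal I" and w: "bsigma_witness I I \<E>"
  shows "Ip I \<E> (\<lambda>n E. F1 E n) \<and> \<not> Isu I \<E> (\<lambda>n E. F1 E n)"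
proof
  have MM: "\<E> \<subseteq> MM I" using w unfolding bsigma_witness_def by blast
  show "Ip I \<E> (\<lambda>n E. F1 E n)" unfolding Ip_def Iconv_def
  proof (intro ballI allI impI)
    fix E e assume E: "E \<in> \<E>" and "(e::real) > 0"
    obtain K where K: "r K < e" using r_small[OF \<open>e>0\<close>] by blast
    have Es: "\<And>k. E k \<subseteq> E (Suc k)" using MM E unfolding MM_def by blast
    have Emono: "E a \<subseteq> E b" if "a \<le> b" for a b
      using lift_Suc_mono_le[of E a b, OF Es that] .
    have "{n. e \<le> \<bar>F1 E n\<bar>} \<subseteq> E K"
    proof
      fix n assume "n \<in> {n. e \<le> \<bar>F1 E n\<bar>}"
      then obtain k where k: "n \<in> E k" "r k = F1 E n" "e \<le> \<bar>F1 E n\<bar>" using F1_pos[OF \<open>e>0\<close>] by blast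
      then have "r K < r k" using K F1_nonneg[of E n] by simp
      then have "k \<le> K" by (simp add: r_less_iff)
      then show "n \<in> E K" using Emono k by blast
    qed
    moreover have "E K \<in> I" using MM E unfolding MM_def by blast
    ultimately show "{n. e \<le> \<bar>F1 E n\<bar>} \<in> I" using idl_sub[OF I] by blast
  qed
  show "\<not> Isu I \<E> (\<lambda>n E. F1 E n)"
  proof
    assume "Isu I \<E> (\<lambda>n E. F1 E n)"
    then obtain Xk :: "nat \<Rightarrow> (nat \<Rightarrow> nat set) set" where X: "\<E> = (\<Union>k. Xk k)"
      and U: "\<And>k. Iu I (Xk k) (\<lambda>n E. F1 E n)" unfolding Isu_def by blast
    define A where "A k = (\<Union>m\<in>{..k}. {n. \<exists>E\<in>Xk m. r k \<le> \<bar>F1 E n\<bar>})" for k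
    have AI: "A k \<in> I" for k
      unfolding A_def using U r_pos unfolding Iu_def by (intro idl_UN[OF I]) auto
    have "A k \<subseteq> A (Suc k)" for k
    proof
      fix n assume "n \<in> A k"
      then obtain m E where mE: "m \<le> k" "E \<in> Xk m" "r k \<le> \<bar>F1 E n\<bar>" unfolding A_def by blast
      have "r (Suc k) \<le> r k" by (simp add: r_le_iff)
      then have "r (Suc k) \<le> \<bar>F1 E n\<bar>" using mE(3) by linarith
      then have "n \<in> {n. \<exists>E\<in>Xk m. r (Suc k) \<le> \<bar>F1 E n\<bar>}" using mE(2) by blast
      moreover have "m \<in> {..Suc k}" using mE(1) by simp
      ultimately show "n \<in> A (Suc k)" unfolding A_def by blast
    qed
    then have "A \<in> MM I" unfolding MM_def using AI by blast
    then obtain E where E: "E \<in> \<E>" and inf: "infinite {n. \<not> E n \<subseteq> A n}"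
      using w unfolding bsigma_witness_def by blast
    obtain m where m: "E \<in> Xk m" using X E by blast
    have "{k. \<not> E k \<subseteq> A k} \<subseteq> {..<m}"
    proof
      fix k assume k: "k \<in> {k. \<not> E k \<subseteq> A k}"
      show "k \<in> {..<m}"
      proof (rule ccontr)
        assume "k \<notin> {..<m}"
        then have "m \<le> k" by simp
        have "E k \<subseteq> A k"
        proof
          fix n assume "n \<in> E k"
          then have "r k \<le> \<bar>F1 E n\<bar>" using F1_ge[of n E k] F1_nonneg[of E n] by simp
          then have "n \<in> {n. \<exists>E\<in>Xk m. r k \<le> \<bar>F1 E n\<bar>}" using m by blast
          moreover have "m \<in> {..k}" using \<open>m \<le> k\<close> by simp
          ultimately show "n \<in> A k" unfolding A_def by blast
        qed
        then show False using k by blast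
      qed
    qed
    then show False using inf finite_subset by blast
  qed
qed

lemma real2: assumes I: "is_ideal I" and w: "bs_witness I I I \<E>"
  shows "Ip I \<E> (\<lambda>n E. F1 E n) \<and> \<not> Iqn I \<E> (\<lambda>n E. F1 E n)"
proof
  have hP: "\<E> \<subseteq> hatP I" using w unfolding bs_witness_def by blast
  show "Ip I \<E> (\<lambda>n E. F1 E n)" unfolding Ip_def Iconv_def
  proof (intro ballI allI impI)
    fix E e assume E: "E \<in> \<E>" and "(e::real) > 0"
    obtain K where K: "r K < e" using r_small[OF \<open>e>0\<close>] by blast
    have "{n. e \<le> \<bar>F1 E n\<bar>} \<subseteq> (\<Union>k\<in>{..<K}. E k)"
    proof
      fix n assume "n \<in> {n. e \<le> \<bar>F1 E n\<bar>}"
      then obtain k where k: "n \<in> E k" "r k = F1 E n" "e \<le> \<bar>F1 E n\<bar>" using F1_pos[OF \<open>e>0\<close>] by blast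
      then have "r K < r k" using K F1_nonneg[of E n] by simp
      then have "k < K" by (simp add: r_less_iff)
      then show "n \<in> (\<Union>k\<in>{..<K}. E k)" using k by blast
    qed
    moreover have "(\<Union>k\<in>{..<K}. E k) \<in> I" using hP E unfolding hatP_def by (intro idl_UN[OF I]) auto
    ultimately show "{n. e \<le> \<bar>F1 E n\<bar>} \<in> I" using idl_sub[OF I] by blast
  qed
  show "\<not> Iqn I \<E> (\<lambda>n E. F1 E n)"
  proof
    assume "Iqn I \<E> (\<lambda>n E. F1 E n)"
    then obtain eps where epos: "\<forall>n. eps n > 0" and ec: "Iconv I eps"
      and bad: "\<And>E. E \<in> \<E> \<Longrightarrow> {n. \<bar>F1 E n\<bar> \<ge> eps n} \<in> I" unfolding Iqn_def by blast
    define A where "A k = {n. lev (eps n) = k}" for k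
    have AI: "A k \<in> I" for k
    proof -
      have "A k \<subseteq> {n. r k \<le> \<bar>eps n\<bar>}" unfolding A_def using lev_le epos
        by (metis (mono_tags, lifting) abs_of_pos mem_Collect_eq subsetI)
      moreover have "{n. r k \<le> \<bar>eps n\<bar>} \<in> I" using ec r_pos unfolding Iconv_def by blast
      ultimately show ?thesis using idl_sub[OF I] by blast
    qed
    have "A \<in> PP I" unfolding PP_def hatP_def disjoint_family_on_def using AI
      unfolding A_def by auto
    then obtain E where E: "E \<in> \<E>" and S: "(\<Union>n. A (Suc n) \<inter> (\<Union>i\<le>n. E i)) \<notin> I"
      using w unfolding bs_witness_def by blast
    have "(\<Union>n. A (Suc n) \<inter> (\<Union>i\<le>n. E i)) \<subseteq> {n. \<bar>F1 E n\<bar> \<ge> eps n}"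
    proof
      fix n assume "n \<in> (\<Union>n. A (Suc n) \<inter> (\<Union>i\<le>n. E i))"
      then obtain j i where j: "lev (eps n) = Suc j" "i \<le> j" "n \<in> E i" unfolding A_def by blast
      have "\<not> r j \<le> eps n" using lev_min[of j "eps n"] j(1) by auto
      moreover have "r j \<le> r i" using j(2) by (simp add: r_le_iff)
      moreover have "r i \<le> F1 E n" using F1_ge[of n E i] j(3) by blast
      ultimately show "n \<in> {n. \<bar>F1 E n\<bar> \<ge> eps n}" by auto
    qed
    then show False using S bad[OF E] idl_sub[OF I] by blast
  qed
qed

definition F3 :: "nat set \<Rightarrow> nat \<Rightarrow> real" where
  "F3 A n = (if n \<in> A then 1 else 0)"

lemma real3: assumes I: "is_ideal I" and w: "addw_witness I I \<A>"
  shows "Iqn I \<A> (\<lambda>n A. F3 A n) \<and> \<not> Isu I \<A> (\<lambda>n A. F3 A n)"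
proof
  have sub: "\<A> \<subseteq> I" using w unfolding addw_witness_def by blast
  have "{n. \<bar>F3 A n\<bar> \<ge> r n} \<in> I" if "A \<in> \<A>" for A
  proof -
    have "{n. \<bar>F3 A n\<bar> \<ge> r n} \<subseteq> A" unfolding F3_def using r_pos
      by (smt (verit) mem_Collect_eq subsetI abs_zero)
    then show ?thesis using sub that idl_sub[OF I] by blast
  qed
  then show "Iqn I \<A> (\<lambda>n A. F3 A n)" unfolding Iqn_def using r_pos Iconv_r[OF I] by blast
  show "\<not> Isu I \<A> (\<lambda>n A. F3 A n)"
  proof
    assume "Isu I \<A> (\<lambda>n A. F3 A n)"
    then obtain Xk :: "nat \<Rightarrow> nat set set" where X: "\<A> = (\<Union>k. Xk k)"
      and U: "\<And>k. Iu I (Xk k) (\<lambda>n A. F3 A n)" unfolding Isu_def by blast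
    define B where "B m = {n. \<exists>A\<in>Xk m. 1 \<le> \<bar>F3 A n\<bar>}" for m
    have "\<forall>m. B m \<in> I" unfolding B_def using U unfolding Iu_def by simp
    then obtain A where A: "A \<in> \<A>" "\<forall>m. \<not> A \<subseteq> B m" using w unfolding addw_witness_def by blast
    obtain m where "A \<in> Xk m" using X A by blast
    then have "A \<subseteq> B m" unfolding B_def F3_def by auto
    then show False using A by blast
  qed
qed
lemma inj_nat_set_real: "\<exists>j :: nat set \<Rightarrow> real. inj j"
  using nat_sets_eqpoll_reals unfolding eqpoll_def by (meson bij_betw_imp_inj_on)

definition enc :: "(nat \<Rightarrow> nat set) \<Rightarrow> nat set" where
  "enc F = {prod_encode (k, m) | k m. m \<in> F k}"

lemma enc_iff: "prod_encode (k, m) \<in> enc F \<longleftrightarrow> m \<in> F k"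
  unfolding enc_def by (auto dest: inj_onD[OF inj_prod_encode, simplified])

lemma inj_enc: "inj enc"
proof (rule injI)
  fix F G assume "enc F = enc G"
  then have "m \<in> F k \<longleftrightarrow> m \<in> G k" for k m using enc_iff by metis
  then show "F = G" by blast
qed

lemma inj_fun_real: "\<exists>j :: (nat \<Rightarrow> nat set) \<Rightarrow> real. inj j"
proof -
  obtain j :: "nat set \<Rightarrow> real" where "inj j" using inj_nat_set_real by blast
  then have "inj (j \<circ> enc)" using inj_enc by (simp add: inj_compose)
  then show ?thesis by blast
qed

lemma realize:
  fixes \<E> :: "'b set" and j :: "'b \<Rightarrow> real" and F :: "nat \<Rightarrow> 'b \<Rightarrow> real"
  assumes inj: "inj j" and I: "is_ideal I"
  defines "X \<equiv> discrete_topology (j ` \<E>)" and "f \<equiv> \<lambda>n x. F n (inv_into \<E> j x)"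
  shows "normal_T2 X" "topspace X \<lesssim> \<E>" "\<forall>n. continuous_map X euclideanreal (f n)"
    "Ip I (topspace X) f = Ip I \<E> F" "Iqn I (topspace X) f = Iqn I \<E> F"
    "Isu I (topspace X) f \<Longrightarrow> Isu I \<E> F"
proof -
  have ij: "inj_on j \<E>" using inj by (simp add: inj_on_def)
  have gj: "inv_into \<E> j (j E) = E" if "E \<in> \<E>" for E using inv_into_f_f[OF ij that] .
  show "normal_T2 X" unfolding X_def normal_T2_def by (simp add: normal_space_discrete_topology)
  show "topspace X \<lesssim> \<E>" unfolding X_def using ij by (simp add: lepoll_refl)
  show "\<forall>n. continuous_map X euclideanreal (f n)" unfolding X_def by simp
  show "Ip I (topspace X) f = Ip I \<E> F" unfolding X_def f_def Ip_def using gj by simp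
  show "Iqn I (topspace X) f = Iqn I \<E> F" unfolding X_def f_def Iqn_def using gj by simp
  assume "Isu I (topspace X) f"
  then obtain Xk :: "nat \<Rightarrow> real set" where XX: "j ` \<E> = (\<Union>k. Xk k)" and U: "\<And>k. Iu I (Xk k) f"
    unfolding Isu_def X_def by auto
  define Yk where "Yk k = {E\<in>\<E>. j E \<in> Xk k}" for k
  have "\<E> = (\<Union>k. Yk k)" unfolding Yk_def using XX by blast
  moreover have "Iu I (Yk k) F" for k unfolding Iu_def
  proof (intro allI impI)
    fix e :: real assume "e > 0"
    have "{n. \<exists>E\<in>Yk k. e \<le> \<bar>F n E\<bar>} \<subseteq> {n. \<exists>x\<in>Xk k. e \<le> \<bar>f n x\<bar>}"
      unfolding Yk_def f_def using gj by force
    then show "{n. \<exists>E\<in>Yk k. e \<le> \<bar>F n E\<bar>} \<in> I"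
      using U \<open>e>0\<close> idl_sub[OF I] unfolding Iu_def by blast
  qed
  ultimately show "Isu I \<E> F" unfolding Isu_def by blast
qed

lemma not_in_classE:
  assumes "\<not> in_class \<alpha> \<beta> X"
  obtains f where "\<forall>n. continuous_map X euclideanreal (f n)" "\<not> (\<alpha> (topspace X) f \<longleftrightarrow> \<beta> (topspace X) f)"
  using assms unfolding in_class_def by blast

lemma not_in_classI:
  assumes "\<forall>n. continuous_map X euclideanreal (f n)" "\<alpha> (topspace X) f" "\<not> \<beta> (topspace X) f"
  shows "\<not> in_class \<alpha> \<beta> X"
  using assms unfolding in_class_def by blast

theorem corollary4p7:
  fixes I :: "nat set set"
  assumes "is_ideal I"
  shows
   "((\<forall>X :: 'a topology. normal_T2 X \<and> \<not> in_class (Ip I) (Isu I) X \<longrightarrow>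
        (\<exists>\<E>. bsigma_witness I I \<E> \<and> \<E> \<lesssim> topspace X)) \<and>
     (\<forall>\<E>. bsigma_witness I I \<E> \<longrightarrow>
        (\<exists>X :: real topology. normal_T2 X \<and> \<not> in_class (Ip I) (Isu I) X \<and> topspace X \<lesssim> \<E>)))
  \<and> ((\<forall>X :: 'a topology. normal_T2 X \<and> \<not> in_class (Ip I) (Iqn I) X \<longrightarrow>
        (\<exists>\<E>. bs_witness I I I \<E> \<and> \<E> \<lesssim> topspace X)) \<and>
     (\<forall>\<E>. bs_witness I I I \<E> \<longrightarrow>
        (\<exists>X :: real topology. normal_T2 X \<and> \<not> in_class (Ip I) (Iqn I) X \<and> topspace X \<lesssim> \<E>)))
  \<and> ((\<forall>X :: 'a topology. normal_T2 X \<and> \<not> in_class (Iqn I) (Isu I) X \<longrightarrow>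
        (\<exists>\<A>. addw_witness I I \<A> \<and> \<A> \<lesssim> topspace X)) \<and>
     (\<forall>\<A>. addw_witness I I \<A> \<longrightarrow>
        (\<exists>X :: real topology. normal_T2 X \<and> \<not> in_class (Iqn I) (Isu I) X \<and> topspace X \<lesssim> \<A>)))"
proof (intro conjI allI impI)
  note I = assms
  obtain j1 :: "(nat \<Rightarrow> nat set) \<Rightarrow> real" where j1: "inj j1" using inj_fun_real by blast
  obtain j3 :: "nat set \<Rightarrow> real" where j3: "inj j3" using inj_nat_set_real by blast
  show "\<exists>\<E>. bsigma_witness I I \<E> \<and> \<E> \<lesssim> topspace X"
    if asm: "normal_T2 X \<and> \<not> in_class (Ip I) (Isu I) X" for X :: "'a topology"
  proof -
    have nic: "\<not> in_class (Ip I) (Isu I) X" using asm by simp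
    obtain f where f: "\<not> (Ip I (topspace X) f \<longleftrightarrow> Isu I (topspace X) f)"
      using nic by (rule not_in_classE)
    have c: "Isu I (topspace X) f \<Longrightarrow> Ip I (topspace X) f" by (rule Isu_Ip[OF I])
    have a: "Ip I (topspace X) f" using f c by blast
    have b: "\<not> Isu I (topspace X) f" using f a by blast
    show ?thesis by (rule low1[OF I a b])
  qed
  show "\<exists>X :: real topology. normal_T2 X \<and> \<not> in_class (Ip I) (Isu I) X \<and> topspace X \<lesssim> \<E>"
    if w: "bsigma_witness I I \<E>" for \<E>
  proof -
    let ?X = "discrete_topology (j1 ` \<E>)"
    let ?f = "\<lambda>n x. F1 (inv_into \<E> j1 x) n"
    have R1: "normal_T2 ?X" by (rule realize(1)[OF j1 I])
    have R2: "topspace ?X \<lesssim> \<E>" by (rule realize(2)[OF j1 I])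
    have R3: "\<forall>n. continuous_map ?X euclideanreal (?f n)"
      by (rule realize(3)[where F="\<lambda>n E. F1 E n", OF j1 I])
    have RR: "Ip I \<E> (\<lambda>n E. F1 E n) \<and> \<not> Isu I \<E> (\<lambda>n E. F1 E n)"
      by (rule real1[OF I w])
    have A: "Ip I (topspace ?X) ?f"
      by (subst realize(4)[where F="\<lambda>n E. F1 E n", OF j1 I]) (rule conjunct1[OF RR])
    have B: "\<not> Isu I (topspace ?X) ?f"
    proof
      assume "Isu I (topspace ?X) ?f"
      then have "Isu I \<E> (\<lambda>n E. F1 E n)" by (rule realize(6)[where F="\<lambda>n E. F1 E n", OF j1 I])
      then show False using RR by blast
    qed
    have C: "\<not> in_class (Ip I) (Isu I) ?X" by (rule not_in_classI[where \<alpha>="Ip I" and \<beta>="Isu I", OF R3 A B])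
    show ?thesis by (rule exI[of _ "?X"]) (intro conjI R1 R2 C)
  qed
  show "\<exists>\<E>. bs_witness I I I \<E> \<and> \<E> \<lesssim> topspace X"
    if asm: "normal_T2 X \<and> \<not> in_class (Ip I) (Iqn I) X" for X :: "'a topology"
  proof -
    have nic: "\<not> in_class (Ip I) (Iqn I) X" using asm by simp
    obtain f where f: "\<not> (Ip I (topspace X) f \<longleftrightarrow> Iqn I (topspace X) f)"
      using nic by (rule not_in_classE)
    have c: "Iqn I (topspace X) f \<Longrightarrow> Ip I (topspace X) f" by (rule Iqn_Ip[OF I])
    have a: "Ip I (topspace X) f" using f c by blast
    have b: "\<not> Iqn I (topspace X) f" using f a by blast
    show ?thesis by (rule low2[OF I a b])
  qed
  show "\<exists>X :: real topology. normal_T2 X \<and> \<not> in_class (Ip I) (Iqn I) X \<and> topspace X \<lesssim> \<E>"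
    if w: "bs_witness I I I \<E>" for \<E>
  proof -
    let ?X = "discrete_topology (j1 ` \<E>)"
    let ?f = "\<lambda>n x. F1 (inv_into \<E> j1 x) n"
    have R1: "normal_T2 ?X" by (rule realize(1)[OF j1 I])
    have R2: "topspace ?X \<lesssim> \<E>" by (rule realize(2)[OF j1 I])
    have R3: "\<forall>n. continuous_map ?X euclideanreal (?f n)"
      by (rule realize(3)[where F="\<lambda>n E. F1 E n", OF j1 I])
    have RR: "Ip I \<E> (\<lambda>n E. F1 E n) \<and> \<not> Iqn I \<E> (\<lambda>n E. F1 E n)"
      by (rule real2[OF I w])
    have A: "Ip I (topspace ?X) ?f"
      by (subst realize(4)[where F="\<lambda>n E. F1 E n", OF j1 I]) (rule conjunct1[OF RR])
    have B: "\<not> Iqn I (topspace ?X) ?f"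
      by (subst realize(5)[where F="\<lambda>n E. F1 E n", OF j1 I]) (rule conjunct2[OF RR])
    have C: "\<not> in_class (Ip I) (Iqn I) ?X" by (rule not_in_classI[where \<alpha>="Ip I" and \<beta>="Iqn I", OF R3 A B])
    show ?thesis by (rule exI[of _ "?X"]) (intro conjI R1 R2 C)
  qed
  show "\<exists>\<A>. addw_witness I I \<A> \<and> \<A> \<lesssim> topspace X"
    if asm: "normal_T2 X \<and> \<not> in_class (Iqn I) (Isu I) X" for X :: "'a topology"
  proof -
    have nic: "\<not> in_class (Iqn I) (Isu I) X" using asm by simp
    obtain f where f: "\<not> (Iqn I (topspace X) f \<longleftrightarrow> Isu I (topspace X) f)"
      using nic by (rule not_in_classE)
    have c: "Isu I (topspace X) f \<Longrightarrow> Iqn I (topspace X) f" by (rule Isu_Iqn[OF I])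
    have a: "Iqn I (topspace X) f" using f c by blast
    have b: "\<not> Isu I (topspace X) f" using f a by blast
    show ?thesis by (rule low3[OF I a b])
  qed
  show "\<exists>X :: real topology. normal_T2 X \<and> \<not> in_class (Iqn I) (Isu I) X \<and> topspace X \<lesssim> \<A>"
    if w: "addw_witness I I \<A>" for \<A>
  proof -
    let ?X = "discrete_topology (j3 ` \<A>)"
    let ?f = "\<lambda>n x. F3 (inv_into \<A> j3 x) n"
    have R1: "normal_T2 ?X" by (rule realize(1)[OF j3 I])
    have R2: "topspace ?X \<lesssim> \<A>" by (rule realize(2)[OF j3 I])
    have R3: "\<forall>n. continuous_map ?X euclideanreal (?f n)"
      by (rule realize(3)[where F="\<lambda>n E. F3 E n", OF j3 I])
    have RR: "Iqn I \<A> (\<lambda>n E. F3 E n) \<and> \<not> Isu I \<A> (\<lambda>n E. F3 E n)"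
      by (rule real3[OF I w])
    have A: "Iqn I (topspace ?X) ?f"
      by (subst realize(5)[where F="\<lambda>n E. F3 E n", OF j3 I]) (rule conjunct1[OF RR])
    have B: "\<not> Isu I (topspace ?X) ?f"
    proof
      assume "Isu I (topspace ?X) ?f"
      then have "Isu I \<A> (\<lambda>n E. F3 E n)" by (rule realize(6)[where F="\<lambda>n E. F3 E n", OF j3 I])
      then show False using RR by blast
    qed
    have C: "\<not> in_class (Iqn I) (Isu I) ?X" by (rule not_in_classI[where \<alpha>="Iqn I" and \<beta>="Isu I", OF R3 A B])
    show ?thesis by (rule exI[of _ "?X"]) (intro conjI R1 R2 C)
  qed
qed
end
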